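(* Let $\Sigma_1$ and $\Sigma_2$ be trees with $n$ vertices each containing exactly one marked vertex. If $\Sigma_1^*\cong\Sigma_2^*$, then $\Sigma_1\cong\Sigma_2$ (as trees with a marked vertex).
   Context: For a tree $\Sigma$ with exactly one marked vertex $m$, the dual graph $\Sigma^*$ is constructed as follows: its vertices are the edges of $\Sigma$, two joined by a simple edge iff the edges of $\Sigma$ share an endpoint; in addition there is one extra vertex $v$ (standing for the marked vertex), joined by a 2-fold edge to each vertex of $\Sigma^*$ corresponding to an edge of $\Sigma$ incident to $m$. Isomorphisms of dual graphs preserve edge multiplicities. *)

theory Defs
  imports Main
begin

definition simple_graph :: "'a set \<Rightarrow> 'a set set \<Rightarrow> bool" where
  "simple_graph V E \<longleftrightarrow> finite V \<and> (\<forall>e\<in>E. e \<subseteq> V \<and> card e = 2)"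

fun is_walk :: "'a set set \<Rightarrow> 'a list \<Rightarrow> bool" where
  "is_walk E [] = False"
| "is_walk E [x] = True"
| "is_walk E (x # y # xs) = ({x, y} \<in> E \<and> is_walk E (y # xs))"

definition connected_graph :: "'a set \<Rightarrow> 'a set set \<Rightarrow> bool" where
  "connected_graph V E \<longleftrightarrow>
     (\<forall>u\<in>V. \<forall>v\<in>V. \<exists>xs. is_walk E xs \<and> set xs \<subseteq> V \<and> hd xs = u \<and> last xs = v)"

definition is_cycle :: "'a set set \<Rightarrow> 'a list \<Rightarrow> bool" where
  "is_cycle E xs \<longleftrightarrow> length xs \<ge> 3 \<and> distinct xs \<and> is_walk E xs \<and> {last xs, hd xs} \<in> E"

definition tree :: "'a set \<Rightarrow> 'a set set \<Rightarrow> bool" where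
  "tree V E \<longleftrightarrow> simple_graph V E \<and> V \<noteq> {} \<and> connected_graph V E \<and> \<not> (\<exists>xs. is_cycle E xs)"

definition marked_tree :: "'a set \<Rightarrow> 'a set set \<Rightarrow> 'a \<Rightarrow> bool" where
  "marked_tree V E m \<longleftrightarrow> tree V E \<and> m \<in> V"

text \<open>Dual graph (a multigraph): vertices are Some e for edges e of the tree, plus None for the
  extra vertex v standing for the marked vertex.\<close>
definition dual_vertices :: "'a set set \<Rightarrow> 'a set option set" where
  "dual_vertices E = insert None (Some ` E)"

fun dual_mult :: "'a set set \<Rightarrow> 'a \<Rightarrow> 'a set option \<Rightarrow> 'a set option \<Rightarrow> nat" where
  "dual_mult E m (Some e) (Some f) = (if e \<noteq> f \<and> e \<inter> f \<noteq> {} then 1 else 0)"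
| "dual_mult E m None (Some f) = (if m \<in> f then 2 else 0)"
| "dual_mult E m (Some e) None = (if m \<in> e then 2 else 0)"
| "dual_mult E m None None = 0"

definition dual_iso :: "'a set set \<Rightarrow> 'a \<Rightarrow> 'b set set \<Rightarrow> 'b \<Rightarrow> bool" where
  "dual_iso E1 m1 E2 m2 \<longleftrightarrow>
     (\<exists>\<phi>. bij_betw \<phi> (dual_vertices E1) (dual_vertices E2) \<and>
        (\<forall>x\<in>dual_vertices E1. \<forall>y\<in>dual_vertices E1.
            dual_mult E2 m2 (\<phi> x) (\<phi> y) = dual_mult E1 m1 x y))"

definition marked_tree_iso :: "'a set \<Rightarrow> 'a set set \<Rightarrow> 'a \<Rightarrow> 'b set \<Rightarrow> 'b set set \<Rightarrow> 'b \<Rightarrow> bool" where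
  "marked_tree_iso V1 E1 m1 V2 E2 m2 \<longleftrightarrow>
     (\<exists>f. bij_betw f V1 V2 \<and> f m1 = m2 \<and>
        (\<forall>u\<in>V1. \<forall>v\<in>V1. {u, v} \<in> E1 \<longleftrightarrow> {f u, f v} \<in> E2))"

end

theory Submission
  imports Defs
begin

section \<open>Walk lemmas\<close>

lemma walk_Cons: "is_walk F (x # xs) \<longleftrightarrow> (xs = [] \<or> ({x, hd xs} \<in> F \<and> is_walk F xs))"
  by (cases xs) auto

lemma walk_nonempty: "is_walk F xs \<Longrightarrow> xs \<noteq> []"
  by (cases xs) auto

lemma walk_mono: "is_walk F xs \<Longrightarrow> F \<subseteq> G \<Longrightarrow> is_walk G xs"
  by (induction F xs rule: is_walk.induct) auto

lemma walk_snoc: "is_walk F xs \<Longrightarrow> {last xs, y} \<in> F \<Longrightarrow> is_walk F (xs @ [y])"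
  by (induction F xs rule: is_walk.induct) auto

lemma walk_rev: "is_walk F xs \<Longrightarrow> is_walk F (rev xs)"
proof (induction F xs rule: is_walk.induct)
  case (3 E x y xs)
  then have "is_walk E (rev (y # xs))" by simp
  moreover have "last (rev (y # xs)) = y" by simp
  moreover have "{y, x} \<in> E" using 3 by (simp add: insert_commute)
  ultimately have "is_walk E (rev (y # xs) @ [x])" using walk_snoc by metis
  then show ?case by simp
qed auto

lemma walk_append: "is_walk F xs \<Longrightarrow> is_walk F ys \<Longrightarrow> {last xs, hd ys} \<in> F \<Longrightarrow> is_walk F (xs @ ys)"
proof (induction F xs rule: is_walk.induct)
  case (2 E x)
  then show ?case using walk_nonempty[of E ys] by (cases ys) auto
qed auto

lemma walk_suffix: "is_walk F (p @ q) \<Longrightarrow> q \<noteq> [] \<Longrightarrow> is_walk F q"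
proof (induction p)
  case (Cons a p)
  then show ?case by (auto simp: walk_Cons)
qed auto

lemma walk_join:
  assumes "is_walk F xs" "is_walk F ys" "hd xs = hd ys"
  shows "is_walk F (rev xs @ tl ys) \<and> hd (rev xs @ tl ys) = last xs \<and> last (rev xs @ tl ys) = last ys"
proof (cases "tl ys")
  case Nil
  then obtain y where y: "ys = [y]" using walk_nonempty[OF assms(2)] by (cases ys) auto
  then show ?thesis using Nil assms walk_rev[OF assms(1)] walk_nonempty[OF assms(1)]
    by (auto simp: hd_rev last_rev)
next
  case (Cons z r)
  then obtain y where ys: "ys = y # z # r" by (cases ys) auto
  have w: "is_walk F (z # r)" "{y, z} \<in> F" using assms(2) ys by auto
  have "last (rev xs) = y" using assms(3) ys walk_nonempty[OF assms(1)] by (simp add: last_rev)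
  then have "is_walk F (rev xs @ (z # r))"
    using walk_append[OF walk_rev[OF assms(1)] w(1)] w(2) by simp
  then show ?thesis using Cons ys walk_nonempty[OF assms(1)] by (auto simp: hd_rev)
qed

lemma walk_distinct:
  "is_walk F xs \<Longrightarrow> \<exists>ys. is_walk F ys \<and> distinct ys \<and> hd ys = hd xs \<and> last ys = last xs"
proof (induction xs)
  case Nil
  then show ?case by simp
next
  case (Cons x xs)
  show ?case
  proof (cases "xs = []")
    case True
    then show ?thesis by (intro exI[of _ "[x]"]) auto
  next
    case False
    then have e: "{x, hd xs} \<in> F" "is_walk F xs" using Cons.prems by (auto simp: walk_Cons)
    then obtain ys where ys: "is_walk F ys" "distinct ys" "hd ys = hd xs" "last ys = last xs"
      using Cons.IH by blast
    show ?thesis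
    proof (cases "x \<in> set ys")
      case True
      then obtain p q where pq: "ys = p @ x # q" by (meson split_list)
      have "is_walk F (x # q)" using walk_suffix[of F p "x # q"] ys(1) pq by simp
      moreover have "distinct (x # q)" using ys(2) pq by simp
      moreover have "last (x # q) = last (x # xs)" using ys(4) pq False by simp
      ultimately show ?thesis by (intro exI[of _ "x # q"]) simp
    next
      case f2: False
      have "ys \<noteq> []" using walk_nonempty[OF ys(1)] .
      then have "is_walk F (x # ys)" using ys e by (auto simp: walk_Cons)
      then show ?thesis using ys f2 False \<open>ys \<noteq> []\<close> by (intro exI[of _ "x # ys"]) auto
    qed
  qed
qed

lemma walk_closed:
  "is_walk E xs \<Longrightarrow> hd xs \<in> S \<Longrightarrow> (\<forall>e\<in>E. e \<inter> S \<noteq> {} \<longrightarrow> e \<subseteq> S) \<Longrightarrow> set xs \<subseteq> S"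
proof (induction E xs rule: is_walk.induct)
  case (3 E x y xs)
  have xS: "x \<in> S" using 3(3) by simp
  have ew: "{x, y} \<in> E" "is_walk E (y # xs)" using 3(2) by auto
  have "{x, y} \<inter> S \<noteq> {}" using xS by auto
  moreover have "{x, y} \<inter> S \<noteq> {} \<longrightarrow> {x, y} \<subseteq> S" using 3(4) ew(1) by (rule bspec)
  ultimately have "{x, y} \<subseteq> S" by (rule rev_mp)
  then have "set (y # xs) \<subseteq> S" using 3(1)[OF ew(2) _ 3(4)] by simp
  then show ?case using xS by simp
qed (simp_all, blast?)

lemma conn_closed:
  assumes "connected_graph V E" "m \<in> V" "m \<in> S" "\<forall>e\<in>E. e \<inter> S \<noteq> {} \<longrightarrow> e \<subseteq> S"
  shows "V \<subseteq> S"
proof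
  fix v assume "v \<in> V"
  then obtain xs where "is_walk E xs" "hd xs = m" "last xs = v"
    using assms(1,2) unfolding connected_graph_def by blast
  moreover have "xs \<noteq> []" using walk_nonempty calculation(1) by blast
  ultimately have "set xs \<subseteq> S" "last xs \<in> set xs" using walk_closed[of E xs S] assms(3,4) by auto
  then show "v \<in> S" using \<open>last xs = v\<close> by blast
qed

lemma no_alt:
  assumes "tree V E" "{u, v} \<in> E" "u \<noteq> v"
    and "is_walk (E - {{u, v}}) xs" "hd xs = u" "last xs = v"
  shows False
proof -
  obtain ys where ys: "is_walk (E - {{u, v}}) ys" "distinct ys" "hd ys = u" "last ys = v"
    using walk_distinct[OF assms(4)] assms(5,6) by metis
  obtain r where r: "ys = u # r" using ys(3) walk_nonempty[OF ys(1)] by (cases ys) auto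
  then obtain w r' where r': "r = w # r'" using ys(4) assms(3) by (cases r) auto
  show False
  proof (cases "r' = []")
    case True
    then show False using ys r r' by simp
  next
    case False
    have l3: "length ys \<ge> 3" using r r' False by (cases r') auto
    have lh: "{last ys, hd ys} \<in> E" using ys assms(2) by (simp add: insert_commute)
    have "is_walk E ys" using walk_mono[OF ys(1)] by blast
    then have "is_cycle E ys"
      unfolding is_cycle_def using l3 lh ys(2) by blast
    then show False using assms(1) unfolding tree_def by blast
  qed
qed

lemma card2_eq: "card e = 2 \<Longrightarrow> a \<in> e \<Longrightarrow> b \<in> e \<Longrightarrow> a \<noteq> b \<Longrightarrow> e = {a, b}"
  by (auto simp: card_2_iff)

lemma card2_other: "card e = 2 \<Longrightarrow> a \<in> e \<Longrightarrow> \<exists>b. b \<noteq> a \<and> e = {a, b}"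
  by (auto simp: card_2_iff)

section \<open>BFS levels\<close>

fun lvl :: "'a set set \<Rightarrow> 'a \<Rightarrow> nat \<Rightarrow> 'a set set" where
  "lvl E m 0 = {e\<in>E. m \<in> e}"
| "lvl E m (Suc k) = lvl E m k \<union> {e\<in>E. \<exists>e'\<in>lvl E m k. e \<noteq> e' \<and> e \<inter> e' \<noteq> {}}"

definition Wb :: "'a set set \<Rightarrow> 'a \<Rightarrow> nat \<Rightarrow> 'a set" where
  "Wb E m j = insert m (\<Union>i\<in>{..<j}. \<Union>(lvl E m i))"

definition lev :: "'a set set \<Rightarrow> 'a \<Rightarrow> 'a set \<Rightarrow> nat" where
  "lev E m e = (LEAST j. e \<in> lvl E m j)"

definition bot :: "'a set set \<Rightarrow> 'a \<Rightarrow> 'a set \<Rightarrow> 'a" where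
  "bot E m e = (THE b. b \<in> e \<and> b \<notin> Wb E m (lev E m e))"

definition top :: "'a set set \<Rightarrow> 'a \<Rightarrow> 'a set \<Rightarrow> 'a" where
  "top E m e = (THE b. b \<in> e \<and> b \<in> Wb E m (lev E m e))"

lemma lvl_sub: "lvl E m k \<subseteq> E"
  by (induction k) auto

lemma lvl_mono: "k \<le> k' \<Longrightarrow> lvl E m k \<subseteq> lvl E m k'"
proof (induction k' )
  case 0 then show ?case by simp
next
  case (Suc k') then show ?case by (cases "k = Suc k'") auto
qed

lemma Wb0: "Wb E m 0 = {m}" by (simp add: Wb_def)

lemma Wb_mono: "j \<le> j' \<Longrightarrow> Wb E m j \<subseteq> Wb E m j'"
  unfolding Wb_def by (intro insert_mono UN_mono) auto

lemma in_Wb_Suc: "x \<in> e \<Longrightarrow> e \<in> lvl E m k \<Longrightarrow> x \<in> Wb E m (Suc k)"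
  unfolding Wb_def by auto

lemma L1:
  assumes "x \<in> Wb E m j" "x \<in> e" "e \<in> E"
  shows "e \<in> lvl E m j"
proof (cases "x = m")
  case True
  then have "e \<in> lvl E m 0" using assms by simp
  then show ?thesis using lvl_mono[of 0 j E m] by auto
next
  case False
  then obtain i e' where i: "i < j" "e' \<in> lvl E m i" "x \<in> e'" using assms(1) unfolding Wb_def by auto
  show ?thesis
  proof (cases "e = e'")
    case True then show ?thesis using i lvl_mono[of i j E m] by auto
  next
    case False
    then have "e \<in> lvl E m (Suc i)" using i assms by auto
    then show ?thesis using i lvl_mono[of "Suc i" j E m] by auto
  qed
qed

lemma lev_in: "e \<in> lvl E m j \<Longrightarrow> e \<in> lvl E m (lev E m e)"
  unfolding lev_def by (rule LeastI)

lemma lev_min: "e \<in> lvl E m j \<Longrightarrow> lev E m e \<le> j"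
  unfolding lev_def by (rule Least_le)

lemma not_below_lev: "i < lev E m e \<Longrightarrow> e \<notin> lvl E m i"
  using lev_min by fastforce

lemma tree_simple: "tree V E \<Longrightarrow> e \<in> E \<Longrightarrow> card e = 2 \<and> e \<subseteq> V"
  unfolding tree_def simple_graph_def by auto

lemma walkA:
  assumes "tree V E" "e \<in> lvl E m k" "x \<in> e"
  shows "\<exists>xs. is_walk (lvl E m k) xs \<and> hd xs = m \<and> last xs = x"
  using assms(2,3)
proof (induction k arbitrary: e x)
  case 0
  then have e: "e \<in> E" "m \<in> e" by auto
  show ?case
  proof (cases "x = m")
    case True then show ?thesis by (intro exI[of _ "[m]"]) auto
  next
    case False
    then have "e = {m, x}" using card2_eq tree_simple[OF assms(1) e(1)] e 0 by metis
    then show ?thesis using 0 by (intro exI[of _ "[m, x]"]) auto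
  qed
next
  case (Suc k)
  show ?case
  proof (cases "e \<in> lvl E m k")
    case True
    then obtain xs where "is_walk (lvl E m k) xs" "hd xs = m" "last xs = x" using Suc by blast
    then show ?thesis using walk_mono[of "lvl E m k" xs "lvl E m (Suc k)"] by auto
  next
    case False
    then obtain e' z where e': "e \<in> E" "e' \<in> lvl E m k" "z \<in> e" "z \<in> e'"
      using Suc.prems by auto
    obtain xs where xs: "is_walk (lvl E m k) xs" "hd xs = m" "last xs = z" using Suc.IH e' by blast
    have xs': "is_walk (lvl E m (Suc k)) xs" using walk_mono[OF xs(1)] by auto
    show ?thesis
    proof (cases "x = z")
      case True then show ?thesis using xs xs' by auto
    next
      case False
      then have "e = {z, x}" using card2_eq tree_simple[OF assms(1) e'(1)] e' Suc.prems by metis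
      then have "{last xs, x} \<in> lvl E m (Suc k)" using xs Suc.prems by auto
      then have "is_walk (lvl E m (Suc k)) (xs @ [x])" using walk_snoc[OF xs'] by blast
      then show ?thesis using xs walk_nonempty[OF xs(1)] by (intro exI[of _ "xs @ [x]"]) auto
    qed
  qed
qed

lemma walkWb:
  assumes "tree V E" "x \<in> Wb E m (Suc k)"
  shows "\<exists>xs. is_walk (lvl E m k) xs \<and> hd xs = m \<and> last xs = x"
proof (cases "x = m")
  case True then show ?thesis by (intro exI[of _ "[m]"]) auto
next
  case False
  then obtain i e where "i < Suc k" "e \<in> lvl E m i" "x \<in> e" using assms(2) unfolding Wb_def by auto
  then have "e \<in> lvl E m k" using lvl_mono[of i k E m] by auto
  then show ?thesis using walkA[OF assms(1)] \<open>x \<in> e\<close> by blast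
qed

lemma reach:
  "is_walk E xs \<Longrightarrow> hd xs \<in> Wb E m j \<Longrightarrow> \<forall>x\<in>set xs. \<exists>j'. x \<in> Wb E m j'"
proof (induction E xs arbitrary: j rule: is_walk.induct)
  case (3 E x y xs)
  have xW: "x \<in> Wb E m j" using 3(3) by simp
  have ew: "{x, y} \<in> E" "is_walk E (y # xs)" using 3(2) by auto
  have "{x, y} \<in> lvl E m j" using L1[OF xW _ ew(1)] by simp
  then have "y \<in> Wb E m (Suc j)" using in_Wb_Suc[of y "{x,y}" E m j] by simp
  then have "\<forall>x\<in>set (y # xs). \<exists>j'. x \<in> Wb E m j'" using 3(1)[OF ew(2)] by simp
  then show ?case using xW by auto
qed (simp_all, blast?)

lemma in_some_Wb:
  assumes "tree V E" "m \<in> V" "v \<in> V"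
  shows "\<exists>j. v \<in> Wb E m j"
proof -
  obtain xs where "is_walk E xs" "hd xs = m" "last xs = v"
    using assms unfolding tree_def connected_graph_def by blast
  moreover have "xs \<noteq> []" using walk_nonempty calculation(1) by blast
  moreover have "hd xs \<in> Wb E m 0" using calculation(2) by (simp add: Wb_def)
  ultimately show ?thesis using reach[of E xs m 0] last_in_set by metis
qed

lemma T1:
  assumes "tree V E" "m \<in> V" "e \<in> E"
  shows "\<exists>j. e \<in> lvl E m j"
proof -
  obtain a b where "e = {a, b}" using tree_simple[OF assms(1,3)] by (auto simp: card_2_iff)
  then have "a \<in> V" "a \<in> e" using tree_simple[OF assms(1,3)] by auto
  then obtain j where j: "a \<in> Wb E m j" using in_some_Wb[OF assms(1,2)] by blast
  have "e \<in> lvl E m j" by (rule L1[OF j \<open>a \<in> e\<close> assms(3)])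
  then show ?thesis by blast
qed

lemma T2:
  assumes "tree V E" "m \<in> V" "e \<in> E"
  shows "\<exists>t b. e = {t, b} \<and> t \<noteq> b \<and> t \<in> Wb E m (lev E m e) \<and> b \<notin> Wb E m (lev E m e)"
proof -
  obtain j0 where "e \<in> lvl E m j0" using T1[OF assms] by blast
  then have ein: "e \<in> lvl E m (lev E m e)" by (rule lev_in)
  have c2: "card e = 2" using tree_simple[OF assms(1,3)] by simp
  show ?thesis
  proof (cases "lev E m e")
    case 0
    then have "m \<in> e" using ein by simp
    then obtain b where "b \<noteq> m" "e = {m, b}" using card2_other[OF c2] by blast
    then show ?thesis using 0 Wb0[of E m] by auto
  next
    case (Suc k)
    then have nk: "e \<notin> lvl E m k" using not_below_lev[of k E m e] by simp
    then obtain e' z where e': "e' \<in> lvl E m k" "z \<in> e" "z \<in> e'" "e \<noteq> e'"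
      using ein Suc by auto
    obtain b where b: "b \<noteq> z" "e = {z, b}" using card2_other[OF c2 e'(2)] by blast
    have zW: "z \<in> Wb E m (Suc k)" using in_Wb_Suc e' by fast
    have "b \<notin> Wb E m (Suc k)"
    proof
      assume bW: "b \<in> Wb E m (Suc k)"
      obtain xs where xs: "is_walk (lvl E m k) xs" "hd xs = m" "last xs = z"
        using walkWb[OF assms(1) zW] by blast
      obtain ys where ys: "is_walk (lvl E m k) ys" "hd ys = m" "last ys = b"
        using walkWb[OF assms(1) bW] by blast
      have j: "is_walk (lvl E m k) (rev xs @ tl ys)" "hd (rev xs @ tl ys) = z" "last (rev xs @ tl ys) = b"
        using walk_join[OF xs(1) ys(1)] xs ys by auto
      have "lvl E m k \<subseteq> E - {{z, b}}" using lvl_sub[of E m k] nk b(2) by auto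
      then have "is_walk (E - {{z, b}}) (rev xs @ tl ys)" using walk_mono[OF j(1)] by blast
      moreover have "{z, b} \<in> E" using b assms(3) by simp
      moreover have "z \<noteq> b" using b(1) by simp
      ultimately show False using no_alt[OF assms(1), of z b] j(2,3) by blast
    qed
    then show ?thesis using b zW Suc by auto
  qed
qed

lemma bot_top:
  assumes "tree V E" "m \<in> V" "e \<in> E"
  shows "e = {top E m e, bot E m e}" "top E m e \<noteq> bot E m e"
    "top E m e \<in> Wb E m (lev E m e)" "bot E m e \<notin> Wb E m (lev E m e)"
    "top E m e \<in> e" "bot E m e \<in> e" "bot E m e \<noteq> m" "bot E m e \<in> V" "top E m e \<in> V"
proof -
  obtain t b where tb: "e = {t, b}" "t \<noteq> b" "t \<in> Wb E m (lev E m e)" "b \<notin> Wb E m (lev E m e)"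
    using T2[OF assms] by blast
  have "bot E m e = b" unfolding bot_def by (rule the_equality) (use tb in auto)
  moreover have "top E m e = t" unfolding top_def by (rule the_equality) (use tb in auto)
  ultimately show "e = {top E m e, bot E m e}" "top E m e \<noteq> bot E m e"
    "top E m e \<in> Wb E m (lev E m e)" "bot E m e \<notin> Wb E m (lev E m e)"
    "top E m e \<in> e" "bot E m e \<in> e" using tb by auto
  moreover have "m \<in> Wb E m (lev E m e)" unfolding Wb_def by simp
  ultimately show "bot E m e \<noteq> m" using tb by auto
  have "e \<subseteq> V" using tree_simple[OF assms(1,3)] by simp
  then show "bot E m e \<in> V" "top E m e \<in> V" using tb \<open>bot E m e = b\<close> \<open>top E m e = t\<close> by auto
qed

lemma lev_in_E: "tree V E \<Longrightarrow> m \<in> V \<Longrightarrow> e \<in> E \<Longrightarrow> e \<in> lvl E m (lev E m e)"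
  using T1 lev_in by metis

lemma bot_inj_aux:
  assumes "tree V E" "m \<in> V" "e \<in> E" "e' \<in> E" "bot E m e = bot E m e'"
    and "lev E m e \<le> lev E m e'"
  shows "e = e'"
proof (rule ccontr)
  assume ne: "e \<noteq> e'"
  note bt = bot_top[OF assms(1,2,3)] and bt' = bot_top[OF assms(1,2,4)]
  define v where "v = bot E m e"
  show False
  proof (cases "lev E m e < lev E m e'")
    case True
    have "v \<in> Wb E m (Suc (lev E m e))"
      using in_Wb_Suc[of v e E m "lev E m e"] lev_in_E[OF assms(1,2,3)] bt(1) v_def by auto
    then have "v \<in> Wb E m (lev E m e')" using Wb_mono[of "Suc (lev E m e)" "lev E m e'" E m] True by auto
    then show False using bt'(4) assms(5) v_def by simp
  next
    case False
    then have eq: "lev E m e = lev E m e'" using assms(6) by simp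
    show False
    proof (cases "lev E m e")
      case 0
      then have "top E m e = m" "top E m e' = m" using bt(3) bt'(3) eq by (auto simp: Wb0)
      then show False using bt(1) bt'(1) assms(5) ne by auto
    next
      case (Suc k)
      have nk: "e \<notin> lvl E m k" "e' \<notin> lvl E m k" using not_below_lev Suc eq by (metis lessI)+
      obtain xs where xs: "is_walk (lvl E m k) xs" "hd xs = m" "last xs = top E m e"
        using walkWb[OF assms(1)] bt(3) Suc by metis
      obtain ys where ys: "is_walk (lvl E m k) ys" "hd ys = m" "last ys = top E m e'"
        using walkWb[OF assms(1)] bt'(3) Suc eq by metis
      let ?F = "lvl E m k \<union> {e'}"
      have ys1: "is_walk ?F ys" using walk_mono[OF ys(1)] by auto
      have "{last ys, v} \<in> ?F" using ys bt'(1) assms(5) v_def by auto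
      then have ys2: "is_walk ?F (ys @ [v])" using walk_snoc[OF ys1] by blast
      have xs1: "is_walk ?F xs" using walk_mono[OF xs(1)] by auto
      have j: "is_walk ?F (rev xs @ tl (ys @ [v]))" "hd (rev xs @ tl (ys @ [v])) = top E m e"
        "last (rev xs @ tl (ys @ [v])) = v"
        using walk_join[OF xs1 ys2] xs ys walk_nonempty[OF ys(1)] by auto
      have ev: "{top E m e, v} = e" using bt(1) v_def by simp
      have "?F \<subseteq> E - {e}" using lvl_sub[of E m k] nk ne assms(4) by auto
      then have "is_walk (E - {{top E m e, v}}) (rev xs @ tl (ys @ [v]))"
        using walk_mono[OF j(1)] ev by simp
      moreover have "{top E m e, v} \<in> E" using ev assms(3) by simp
      moreover have "top E m e \<noteq> v" using bt(2) v_def by simp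
      ultimately show False
        using no_alt[OF assms(1), of "top E m e" v] j(2,3) by blast
    qed
  qed
qed

lemma bot_inj: assumes "tree V E" "m \<in> V" shows "inj_on (bot E m) E"
proof (rule inj_onI)
  fix e e' assume a0: "e \<in> E" "e' \<in> E" "bot E m e = bot E m e'"
  note a = assms a0
  show "e = e'"
  proof (cases "lev E m e \<le> lev E m e'")
    case True then show ?thesis by (rule bot_inj_aux[OF a(1-5)])
  next
    case False
    then have "lev E m e' \<le> lev E m e" by simp
    then have "e' = e" by (rule bot_inj_aux[OF a(1,2,4,3) a(5)[symmetric]])
    then show ?thesis by simp
  qed
qed

lemma bot_image:
  assumes "tree V E" "m \<in> V"
  shows "bot E m ` E = V - {m}"
proof
  show "bot E m ` E \<subseteq> V - {m}"
  proof
    fix x assume "x \<in> bot E m ` E"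
    then obtain e where e: "e \<in> E" "x = bot E m e" by blast
    note bt = bot_top[OF assms e(1)]
    show "x \<in> V - {m}" using bt(7,8) e(2) by simp
  qed
next
  show "V - {m} \<subseteq> bot E m ` E"
  proof
    fix v assume v: "v \<in> V - {m}"
    then have "v \<in> V" by simp
    then obtain j where j: "v \<in> Wb E m j" using in_some_Wb[OF assms] by blast
    define j0 where "j0 = (LEAST j. v \<in> Wb E m j)"
    have j0: "v \<in> Wb E m j0" unfolding j0_def using j by (rule LeastI)
    have j0min: "\<And>i. i < j0 \<Longrightarrow> v \<notin> Wb E m i" unfolding j0_def by (rule not_less_Least)
    have "j0 \<noteq> 0"
    proof
      assume "j0 = 0"
      then have "v \<in> {m}" using j0 Wb0[of E m] by simp
      then show False using v by simp
    qed
    then obtain k where k: "j0 = Suc k" using not0_implies_Suc by blast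
    have vk: "v \<notin> Wb E m k" using j0min k by simp
    have "v \<in> insert m (\<Union>i\<in>{..<Suc k}. \<Union>(lvl E m i))" using j0 k unfolding Wb_def by simp
    then have "v \<in> (\<Union>i\<in>{..<Suc k}. \<Union>(lvl E m i))" using v by blast
    then obtain i e where ie: "i < Suc k" "e \<in> lvl E m i" "v \<in> e" by blast
    have eE: "e \<in> E" using ie(2) lvl_sub[of E m i] by blast
    note bt = bot_top[OF assms eE]
    have "lev E m e \<le> k" using lev_min[OF ie(2)] ie(1) by simp
    then have "top E m e \<in> Wb E m k" using bt(3) Wb_mono[of "lev E m e" k E m] by blast
    then have "v \<noteq> top E m e" using vk by blast
    then have "v = bot E m e" using ie(3) bt(1) by blast
    then show "v \<in> bot E m ` E" using eE by blast
  qed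
qed

lemma psi_lvl:
  assumes bij: "bij_betw \<psi> E1 E2"
    and adj: "\<forall>e\<in>E1. \<forall>f\<in>E1. (\<psi> e \<noteq> \<psi> f \<and> \<psi> e \<inter> \<psi> f \<noteq> {}) \<longleftrightarrow> (e \<noteq> f \<and> e \<inter> f \<noteq> {})"
    and mm: "\<forall>e\<in>E1. m2 \<in> \<psi> e \<longleftrightarrow> m1 \<in> e"
  shows "\<psi> ` lvl E1 m1 k = lvl E2 m2 k"
proof (induction k)
  case 0
  have im: "\<psi> ` E1 = E2" using bij by (simp add: bij_betw_def)
  show ?case
  proof
    show "\<psi> ` lvl E1 m1 0 \<subseteq> lvl E2 m2 0" using im mm by auto
    show "lvl E2 m2 0 \<subseteq> \<psi> ` lvl E1 m1 0"
    proof
      fix x assume "x \<in> lvl E2 m2 0"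
      then obtain e where "e \<in> E1" "x = \<psi> e" "m2 \<in> x" using im by auto
      then show "x \<in> \<psi> ` lvl E1 m1 0" using mm by auto
    qed
  qed
next
  case (Suc k)
  have im: "\<psi> ` E1 = E2" using bij by (simp add: bij_betw_def)
  have sub: "lvl E1 m1 k \<subseteq> E1" by (rule lvl_sub)
  have "\<psi> ` {e\<in>E1. \<exists>e'\<in>lvl E1 m1 k. e \<noteq> e' \<and> e \<inter> e' \<noteq> {}}
      = {e\<in>E2. \<exists>e'\<in>lvl E2 m2 k. e \<noteq> e' \<and> e \<inter> e' \<noteq> {}}"
  proof
    show "\<psi> ` {e\<in>E1. \<exists>e'\<in>lvl E1 m1 k. e \<noteq> e' \<and> e \<inter> e' \<noteq> {}}
      \<subseteq> {e\<in>E2. \<exists>e'\<in>lvl E2 m2 k. e \<noteq> e' \<and> e \<inter> e' \<noteq> {}}"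
    proof
      fix x assume "x \<in> \<psi> ` {e\<in>E1. \<exists>e'\<in>lvl E1 m1 k. e \<noteq> e' \<and> e \<inter> e' \<noteq> {}}"
      then obtain e e' where "x = \<psi> e" "e \<in> E1" "e' \<in> lvl E1 m1 k" "e \<noteq> e'" "e \<inter> e' \<noteq> {}" by auto
      moreover have "\<psi> e' \<in> lvl E2 m2 k" using Suc.IH calculation by blast
      moreover have "\<psi> e \<noteq> \<psi> e' \<and> \<psi> e \<inter> \<psi> e' \<noteq> {}" using adj calculation sub by blast
      ultimately show "x \<in> {e\<in>E2. \<exists>e'\<in>lvl E2 m2 k. e \<noteq> e' \<and> e \<inter> e' \<noteq> {}}" using im by blast
    qed
  next
    show "{e\<in>E2. \<exists>e'\<in>lvl E2 m2 k. e \<noteq> e' \<and> e \<inter> e' \<noteq> {}}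
      \<subseteq> \<psi> ` {e\<in>E1. \<exists>e'\<in>lvl E1 m1 k. e \<noteq> e' \<and> e \<inter> e' \<noteq> {}}"
    proof
      fix x assume "x \<in> {e\<in>E2. \<exists>e'\<in>lvl E2 m2 k. e \<noteq> e' \<and> e \<inter> e' \<noteq> {}}"
      then obtain y where y: "x \<in> E2" "y \<in> lvl E2 m2 k" "x \<noteq> y" "x \<inter> y \<noteq> {}" by auto
      obtain e where e: "e \<in> E1" "x = \<psi> e" using y im by auto
      obtain e' where e': "e' \<in> lvl E1 m1 k" "y = \<psi> e'" using y Suc.IH by auto
      have "e \<noteq> e' \<and> e \<inter> e' \<noteq> {}" using adj e e' y sub by blast
      then show "x \<in> \<psi> ` {e\<in>E1. \<exists>e'\<in>lvl E1 m1 k. e \<noteq> e' \<and> e \<inter> e' \<noteq> {}}" using e e' by blast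
    qed
  qed
  then show ?case using Suc.IH by (simp add: image_Un)
qed

lemma main:
  assumes t1: "tree V1 E1" "m1 \<in> V1" and t2: "tree V2 E2" "m2 \<in> V2"
    and bij: "bij_betw \<psi> E1 E2"
    and adj: "\<forall>e\<in>E1. \<forall>f\<in>E1. (\<psi> e \<noteq> \<psi> f \<and> \<psi> e \<inter> \<psi> f \<noteq> {}) \<longleftrightarrow> (e \<noteq> f \<and> e \<inter> f \<noteq> {})"
    and mm: "\<forall>e\<in>E1. m2 \<in> \<psi> e \<longleftrightarrow> m1 \<in> e"
  shows "marked_tree_iso V1 E1 m1 V2 E2 m2"
proof -
  have L: "\<And>k. \<psi> ` lvl E1 m1 k = lvl E2 m2 k" using psi_lvl[OF bij adj mm] .
  have injp: "inj_on \<psi> E1" and imp: "\<psi> ` E1 = E2" using bij by (auto simp: bij_betw_def)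
  have Liff: "\<And>e k. e \<in> E1 \<Longrightarrow> \<psi> e \<in> lvl E2 m2 k \<longleftrightarrow> e \<in> lvl E1 m1 k"
  proof -
    fix e k assume e: "e \<in> E1"
    show "\<psi> e \<in> lvl E2 m2 k \<longleftrightarrow> e \<in> lvl E1 m1 k"
      using L[of k] inj_on_image_mem_iff[OF injp e lvl_sub[of E1 m1 k]] by simp
  qed
  have levp: "\<And>e. e \<in> E1 \<Longrightarrow> lev E2 m2 (\<psi> e) = lev E1 m1 e"
    unfolding lev_def using Liff by simp
  define b1 where "b1 = bot E1 m1"
  define b2 where "b2 = bot E2 m2"
  define f where "f v = (if v = m1 then m2 else b2 (\<psi> (inv_into E1 b1 v)))" for v
  have bij1: "bij_betw b1 E1 (V1 - {m1})"
    unfolding bij_betw_def b1_def using bot_inj[OF t1] bot_image[OF t1] by simp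
  have bij2: "bij_betw b2 E2 (V2 - {m2})"
    unfolding bij_betw_def b2_def using bot_inj[OF t2] bot_image[OF t2] by simp
  have bijc: "bij_betw (b2 \<circ> \<psi> \<circ> inv_into E1 b1) (V1 - {m1}) (V2 - {m2})"
    using bij_betw_trans[OF bij_betw_trans[OF bij_betw_inv_into[OF bij1] bij] bij2]
    by (simp add: comp_assoc)
  have bijf': "bij_betw f (V1 - {m1}) (V2 - {m2})"
    using bijc by (rule bij_betw_cong[THEN iffD1, rotated]) (auto simp: f_def)
  have bijf: "bij_betw f V1 V2"
  proof -
    have fm: "f m1 = m2" by (simp add: f_def)
    have "bij_betw f ((V1 - {m1}) \<union> {m1}) ((V2 - {m2}) \<union> {f m1})"
      by (rule notIn_Un_bij_betw) (use bijf' fm in auto)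
    moreover have "(V1 - {m1}) \<union> {m1} = V1" "(V2 - {m2}) \<union> {f m1} = V2" using t1(2) t2(2) fm by auto
    ultimately show ?thesis by simp
  qed
  then have injf: "inj_on f V1" by (simp add: bij_betw_def)
  have fb: "\<And>e. e \<in> E1 \<Longrightarrow> f (b1 e) = b2 (\<psi> e)"
  proof -
    fix e assume e: "e \<in> E1"
    have "b1 e \<noteq> m1" using bot_top(4)[OF t1 e] unfolding b1_def Wb_def by auto
    moreover have "inv_into E1 b1 (b1 e) = e" using bij1 e by (simp add: bij_betw_def)
    ultimately show "f (b1 e) = b2 (\<psi> e)" by (simp add: f_def)
  qed
  have ft: "\<And>e. e \<in> E1 \<Longrightarrow> f (top E1 m1 e) = top E2 m2 (\<psi> e)"
  proof -
    fix e assume e: "e \<in> E1"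
    have pe: "\<psi> e \<in> E2" using e imp by blast
    note bt = bot_top[OF t1 e] and bt2 = bot_top[OF t2 pe]
    show "f (top E1 m1 e) = top E2 m2 (\<psi> e)"
    proof (cases "lev E1 m1 e")
      case 0
      then have "top E1 m1 e = m1" using bt(3) by (auto simp: Wb0)
      moreover have "top E2 m2 (\<psi> e) = m2" using bt2(3) levp[OF e] 0 by (auto simp: Wb0)
      ultimately show ?thesis by (simp add: f_def)
    next
      case (Suc k)
      define t where "t = top E1 m1 e"
      have lp: "lev E2 m2 (\<psi> e) = Suc k" using levp[OF e] Suc by simp
      have nk2: "\<psi> e \<notin> lvl E2 m2 k" using not_below_lev[of k E2 m2 "\<psi> e"] lp by simp
      have nk1: "e \<notin> lvl E1 m1 k" using not_below_lev[of k E1 m1 e] Suc by simp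
      have "t \<noteq> m1"
      proof
        assume "t = m1"
        then have "e \<in> lvl E1 m1 0" using bt(1) e t_def by auto
        then show False using nk1 lvl_mono[of 0 k E1 m1] by auto
      qed
      moreover have "t \<in> V1" using bt(1) t_def tree_simple[OF t1(1) e] by auto
      ultimately have tV: "t \<in> V1 - {m1}" by simp
      define e'' where "e'' = inv_into E1 b1 t"
      have e''E: "e'' \<in> E1" and be'': "b1 e'' = t"
        using tV bij1 unfolding e''_def bij_betw_def by (auto simp: inv_into_into f_inv_into_f)
      have fte: "f t = b2 (\<psi> e'')" using fb[OF e''E] be'' by simp
      define l where "l = lev E1 m1 e''"
      have "t \<notin> Wb E1 m1 l" using bot_top(4)[OF t1 e''E] be'' unfolding b1_def l_def by simp
      moreover have "t \<in> Wb E1 m1 (Suc k)" using bt(3) Suc t_def by simp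
      ultimately have lk: "l \<le> k" using Wb_mono[of "Suc k" l E1 m1] by (meson not_less_eq_eq subsetD)
      have "e \<noteq> e''" using be'' bt(2) t_def unfolding b1_def by auto
      moreover have "t \<in> e \<inter> e''" using be'' bot_top(1)[OF t1 e''E] bt(1) t_def unfolding b1_def by auto
      ultimately have "\<psi> e \<noteq> \<psi> e'' \<and> \<psi> e \<inter> \<psi> e'' \<noteq> {}" using adj e e''E by blast
      then obtain w where w: "w \<in> \<psi> e" "w \<in> \<psi> e''" by blast
      have pe'': "\<psi> e'' \<in> E2" using e''E imp by blast
      note bt3 = bot_top[OF t2 pe'']
      have lp'': "lev E2 m2 (\<psi> e'') = l" using levp[OF e''E] l_def by simp
      have "\<psi> e'' \<in> lvl E2 m2 l" using lev_in_E[OF t2 pe''] lp'' by simp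
      then have "\<psi> e'' \<in> lvl E2 m2 k" using lvl_mono[OF lk, of E2 m2] by auto
      then have "w \<in> Wb E2 m2 (Suc k)" using in_Wb_Suc w(2) by fast
      then have "w \<noteq> bot E2 m2 (\<psi> e)" using bt2(4) lp by auto
      then have wt: "w = top E2 m2 (\<psi> e)" using bt2(1) w(1) by auto
      have "w \<noteq> top E2 m2 (\<psi> e'')"
      proof
        assume "w = top E2 m2 (\<psi> e'')"
        then have "w \<in> Wb E2 m2 l" using bt3(3) lp'' by simp
        then have "\<psi> e \<in> lvl E2 m2 l" using L1 w(1) pe by metis
        then show False using nk2 lvl_mono[OF lk, of E2 m2] by auto
      qed
      then have "w = b2 (\<psi> e'')" using bt3(1) w(2) unfolding b2_def by auto
      then show ?thesis using wt fte t_def by simp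
    qed
  qed
  have pe_eq: "\<And>e. e \<in> E1 \<Longrightarrow> \<psi> e = {f (top E1 m1 e), f (b1 e)}"
  proof -
    fix e assume e: "e \<in> E1"
    have pe: "\<psi> e \<in> E2" using e imp by blast
    show "\<psi> e = {f (top E1 m1 e), f (b1 e)}"
      using bot_top(1)[OF t2 pe] ft[OF e] fb[OF e] unfolding b2_def by simp
  qed
  have edges: "\<forall>u\<in>V1. \<forall>v\<in>V1. {u, v} \<in> E1 \<longleftrightarrow> {f u, f v} \<in> E2"
  proof (intro ballI iffI)
    fix u v assume uv: "u \<in> V1" "v \<in> V1" "{u, v} \<in> E1"
    have "{u, v} = {top E1 m1 {u,v}, b1 {u,v}}" using bot_top(1)[OF t1 uv(3)] unfolding b1_def by simp
    then have "f ` {u, v} = f ` {top E1 m1 {u,v}, b1 {u,v}}" by simp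
    then have "{f u, f v} = \<psi> {u, v}" using pe_eq[OF uv(3)] by simp
    then show "{f u, f v} \<in> E2" using imp uv(3) by blast
  next
    fix u v assume uv: "u \<in> V1" "v \<in> V1" "{f u, f v} \<in> E2"
    then obtain e where e: "e \<in> E1" "{f u, f v} = \<psi> e" using imp by (metis imageE)
    have sub: "e \<subseteq> V1" using tree_simple[OF t1(1) e(1)] by simp
    have ee: "e = {top E1 m1 e, b1 e}" using bot_top(1)[OF t1 e(1)] unfolding b1_def by simp
    have "f ` {u, v} = f ` e" using e(2) pe_eq[OF e(1)] ee by (metis image_insert image_empty)
    moreover have "{u, v} \<subseteq> V1" using uv by simp
    ultimately have "{u, v} = e" using inj_on_image_eq_iff[OF injf _ sub] by blast
    then show "{u, v} \<in> E1" using e by simp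
  qed
  show ?thesis unfolding marked_tree_iso_def
    using bijf edges by (intro exI[of _ f]) (auto simp: f_def)
qed

lemma card_dual: "finite E \<Longrightarrow> card (dual_vertices E) = Suc (card E)"
  unfolding dual_vertices_def
  by (simp add: card_insert_disjoint card_image)

lemma tree_fin: "tree V E \<Longrightarrow> finite E"
proof -
  assume t: "tree V E"
  then have "E \<subseteq> Pow V" "finite V" unfolding tree_def simple_graph_def by auto
  then show "finite E" by (meson finite_Pow_iff finite_subset)
qed

theorem lemma5:
  fixes V1 :: "'a set" and E1 :: "'a set set" and m1 :: 'a
    and V2 :: "'b set" and E2 :: "'b set set" and m2 :: 'b
    and n :: nat
  assumes "marked_tree V1 E1 m1" and "marked_tree V2 E2 m2"
    and "card V1 = n" and "card V2 = n"
    and "dual_iso E1 m1 E2 m2"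
  shows "marked_tree_iso V1 E1 m1 V2 E2 m2"
proof -
  have t1: "tree V1 E1" "m1 \<in> V1" using assms(1) unfolding marked_tree_def by auto
  have t2: "tree V2 E2" "m2 \<in> V2" using assms(2) unfolding marked_tree_def by auto
  obtain \<phi> where bij: "bij_betw \<phi> (dual_vertices E1) (dual_vertices E2)"
    and mul: "\<forall>x\<in>dual_vertices E1. \<forall>y\<in>dual_vertices E1.
            dual_mult E2 m2 (\<phi> x) (\<phi> y) = dual_mult E1 m1 x y"
    using assms(5) unfolding dual_iso_def by blast
  have injphi: "inj_on \<phi> (dual_vertices E1)" and imphi: "\<phi> ` dual_vertices E1 = dual_vertices E2"
    using bij by (auto simp: bij_betw_def)
  have N1: "None \<in> dual_vertices E1" by (simp add: dual_vertices_def)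
  have S1: "\<And>e. e \<in> E1 \<Longrightarrow> Some e \<in> dual_vertices E1" by (simp add: dual_vertices_def)
  have D2: "\<And>x. x \<in> dual_vertices E2 \<Longrightarrow> x = None \<or> (\<exists>g\<in>E2. x = Some g)"
    by (auto simp: dual_vertices_def)
  have cardE: "card E1 = card E2"
    using bij_betw_same_card[OF bij] card_dual[OF tree_fin[OF t1(1)]] card_dual[OF tree_fin[OF t2(1)]]
    by simp
  show ?thesis
  proof (cases "\<phi> None = None")
    case True
    define \<psi> where "\<psi> e = the (\<phi> (Some e))" for e
    have phiS: "\<And>e. e \<in> E1 \<Longrightarrow> \<phi> (Some e) = Some (\<psi> e) \<and> \<psi> e \<in> E2"
    proof -
      fix e assume e: "e \<in> E1"
      have "\<phi> (Some e) \<noteq> None"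
      proof
        assume "\<phi> (Some e) = None"
        then have "\<phi> (Some e) = \<phi> None" using True by simp
        then have "Some e = None" using inj_onD[OF injphi _ S1[OF e] N1] by blast
        then show False by simp
      qed
      moreover have "\<phi> (Some e) \<in> dual_vertices E2" using imphi S1[OF e] by blast
      ultimately have "\<exists>g\<in>E2. \<phi> (Some e) = Some g" using D2[of "\<phi> (Some e)"] by (meson disjE)
      then obtain g where "g \<in> E2" "\<phi> (Some e) = Some g" by (rule bexE)
      then show "\<phi> (Some e) = Some (\<psi> e) \<and> \<psi> e \<in> E2" by (simp add: \<psi>_def)
    qed
    have bijp: "bij_betw \<psi> E1 E2"
      unfolding bij_betw_def
    proof
      show "inj_on \<psi> E1"
      proof (rule inj_onI)
        fix e f assume ef: "e \<in> E1" "f \<in> E1" "\<psi> e = \<psi> f"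
        then have "\<phi> (Some e) = \<phi> (Some f)" using phiS by metis
        then have "Some e = Some f" using inj_onD[OF injphi _ S1[OF ef(1)] S1[OF ef(2)]] by blast
        then show "e = f" by simp
      qed
      show "\<psi> ` E1 = E2"
      proof
        show "\<psi> ` E1 \<subseteq> E2" using phiS by blast
        show "E2 \<subseteq> \<psi> ` E1"
        proof
          fix g assume g: "g \<in> E2"
          then have "Some g \<in> dual_vertices E2" by (simp add: dual_vertices_def)
          then obtain x where x: "x \<in> dual_vertices E1" "\<phi> x = Some g" using imphi by force
          have "x \<noteq> None"
          proof
            assume "x = None"
            then show False using x(2) True by simp
          qed
          then obtain e where e: "e \<in> E1" "x = Some e" using x(1) by (auto simp: dual_vertices_def)
          then have "\<psi> e = g" using phiS[OF e(1)] x(2) by simp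
          then show "g \<in> \<psi> ` E1" using e by blast
        qed
      qed
    qed
    have adj: "\<forall>e\<in>E1. \<forall>f\<in>E1. (\<psi> e \<noteq> \<psi> f \<and> \<psi> e \<inter> \<psi> f \<noteq> {}) \<longleftrightarrow> (e \<noteq> f \<and> e \<inter> f \<noteq> {})"
    proof (intro ballI)
      fix e f assume ef: "e \<in> E1" "f \<in> E1"
      have "dual_mult E2 m2 (\<phi> (Some e)) (\<phi> (Some f)) = dual_mult E1 m1 (Some e) (Some f)"
        using mul S1[OF ef(1)] S1[OF ef(2)] by blast
      then have "(if \<psi> e \<noteq> \<psi> f \<and> \<psi> e \<inter> \<psi> f \<noteq> {} then 1 else 0 :: nat)
          = (if e \<noteq> f \<and> e \<inter> f \<noteq> {} then 1 else 0)"
        using phiS[OF ef(1)] phiS[OF ef(2)] by simp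
      then show "(\<psi> e \<noteq> \<psi> f \<and> \<psi> e \<inter> \<psi> f \<noteq> {}) \<longleftrightarrow> (e \<noteq> f \<and> e \<inter> f \<noteq> {})"
        by (auto split: if_splits)
    qed
    have mm: "\<forall>e\<in>E1. m2 \<in> \<psi> e \<longleftrightarrow> m1 \<in> e"
    proof
      fix e assume e: "e \<in> E1"
      have "dual_mult E2 m2 (\<phi> None) (\<phi> (Some e)) = dual_mult E1 m1 None (Some e)"
        using mul N1 S1[OF e] by blast
      then have "(if m2 \<in> \<psi> e then 2 else 0 :: nat) = (if m1 \<in> e then 2 else 0)"
        using phiS[OF e] True by simp
      then show "m2 \<in> \<psi> e \<longleftrightarrow> m1 \<in> e" by (simp split: if_splits)
    qed
    show ?thesis by (rule main[OF t1 t2 bijp adj mm])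
  next
    case False
    have "\<phi> None \<in> dual_vertices E2" using imphi N1 by blast
    then have "\<exists>g\<in>E2. \<phi> None = Some g" using D2[of "\<phi> None"] False by (meson disjE)
    then obtain a where a: "a \<in> E2" "\<phi> None = Some a" by (rule bexE)
    have "None \<in> dual_vertices E2" by (simp add: dual_vertices_def)
    then obtain x where x: "x \<in> dual_vertices E1" "\<phi> x = None" using imphi by force
    have "x \<noteq> None"
    proof
      assume "x = None"
      then show False using x(2) False by simp
    qed
    then obtain e0 where e0: "e0 \<in> E1" "\<phi> (Some e0) = None" using x by (auto simp: dual_vertices_def)
    have other: "\<And>f. f \<in> E1 \<Longrightarrow> f \<noteq> e0 \<Longrightarrow> e0 \<inter> f = {} \<and> m1 \<notin> f"
    proof -
      fix f assume f: "f \<in> E1" "f \<noteq> e0"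
      have "\<phi> (Some f) \<noteq> None"
      proof
        assume "\<phi> (Some f) = None"
        then have "\<phi> (Some f) = \<phi> (Some e0)" using e0 by simp
        then have "Some f = Some e0" using inj_onD[OF injphi _ S1[OF f(1)] S1[OF e0(1)]] by blast
        then show False using f by simp
      qed
      moreover have "\<phi> (Some f) \<in> dual_vertices E2" using imphi S1[OF f(1)] by blast
      ultimately have "\<exists>g\<in>E2. \<phi> (Some f) = Some g" using D2[of "\<phi> (Some f)"] by (meson disjE)
      then obtain g where g: "\<phi> (Some f) = Some g" by (rule bexE)
      have "dual_mult E2 m2 (\<phi> (Some e0)) (\<phi> (Some f)) = dual_mult E1 m1 (Some e0) (Some f)"
        using mul S1[OF e0(1)] S1[OF f(1)] by blast
      then have "(if m2 \<in> g then 2 else 0 :: nat) = (if e0 \<noteq> f \<and> e0 \<inter> f \<noteq> {} then 1 else 0)"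
        using g e0 by simp
      then have c1: "e0 \<inter> f = {}" using f(2) by (auto split: if_splits)
      have "dual_mult E2 m2 (\<phi> None) (\<phi> (Some f)) = dual_mult E1 m1 None (Some f)"
        using mul N1 S1[OF f(1)] by blast
      then have "(if a \<noteq> g \<and> a \<inter> g \<noteq> {} then 1 else 0 :: nat) = (if m1 \<in> f then 2 else 0)"
        using g a by simp
      then have "m1 \<notin> f" by (simp split: if_splits)
      then show "e0 \<inter> f = {} \<and> m1 \<notin> f" using c1 by simp
    qed
    have closed: "\<forall>e\<in>E1. e \<inter> insert m1 e0 \<noteq> {} \<longrightarrow> e \<subseteq> insert m1 e0"
    proof (intro ballI impI)
      fix e assume e: "e \<in> E1" "e \<inter> insert m1 e0 \<noteq> {}"
      show "e \<subseteq> insert m1 e0"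
      proof (cases "e = e0")
        case True then show ?thesis by blast
      next
        case False
        then have "e0 \<inter> e = {}" "m1 \<notin> e" using other e(1) by auto
        then have "e \<inter> insert m1 e0 = {}" by blast
        then show ?thesis using e(2) by simp
      qed
    qed
    have VS: "V1 \<subseteq> insert m1 e0"
      using conn_closed[of V1 E1 m1 "insert m1 e0"] t1 closed unfolding tree_def by auto
    have E1s: "E1 = {e0}"
    proof
      show "{e0} \<subseteq> E1" using e0 by simp
      show "E1 \<subseteq> {e0}"
      proof
        fix f assume f: "f \<in> E1"
        show "f \<in> {e0}"
        proof (rule ccontr)
          assume "f \<notin> {e0}"
          then have o: "e0 \<inter> f = {}" "m1 \<notin> f" using other f by auto
          have "f \<subseteq> V1" "card f = 2" using tree_simple[OF t1(1) f] by auto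
          then have "f \<subseteq> insert m1 e0" using VS by blast
          then have "f = {}" using o by blast
          then show False using \<open>card f = 2\<close> by simp
        qed
      qed
    qed
    have "card E2 = 1" using cardE E1s by simp
    then obtain a' where "E2 = {a'}" by (auto simp: card_Suc_eq)
    then have E2s: "E2 = {a}" using a(1) by simp
    have "dual_mult E2 m2 (\<phi> None) (\<phi> (Some e0)) = dual_mult E1 m1 None (Some e0)"
      using mul N1 S1[OF e0(1)] by blast
    then have "(if m2 \<in> a then 2 else 0 :: nat) = (if m1 \<in> e0 then 2 else 0)"
      using a e0 by simp
    then have ma: "m2 \<in> a \<longleftrightarrow> m1 \<in> e0" by (simp split: if_splits)
    have bijp: "bij_betw (\<lambda>_. a) E1 E2" using E1s E2s by (simp add: bij_betw_def)
    have adj: "\<forall>e\<in>E1. \<forall>f\<in>E1. ((\<lambda>_. a) e \<noteq> (\<lambda>_. a) f \<and> (\<lambda>_. a) e \<inter> (\<lambda>_. a) f \<noteq> {}) \<longleftrightarrow> (e \<noteq> f \<and> e \<inter> f \<noteq> {})"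
      using E1s by simp
    have mm: "\<forall>e\<in>E1. m2 \<in> (\<lambda>_. a) e \<longleftrightarrow> m1 \<in> e" using E1s ma by simp
    show ?thesis by (rule main[OF t1 t2 bijp adj mm])
  qed
qed

end
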